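(* In the Call-by-Value probabilistic $\lambda$-calculus (as defined in the context), the full lifting $\Rrightarrow_E$ of $\rightsquigarrow_E$ is $\mathrm{obs}_{\mathrm{Nnf}}$-diamond: for all multi-distributions $\mathbf m,\mathbf n_1,\mathbf n_2$ with $\mathbf m\Rrightarrow_E\mathbf n_1$ and $\mathbf m\Rrightarrow_E\mathbf n_2$, either $\mathbf n_1=\mathbf n_2$ or there is $\mathbf s$ with $\mathbf n_1\Rrightarrow_E\mathbf s$ and $\mathbf n_2\Rrightarrow_E\mathbf s$; and moreover $\mathrm{obs}_{\mathrm{Nnf}}(\mathbf n_1)=\mathrm{obs}_{\mathrm{Nnf}}(\mathbf n_2)$.
   Context: Terms $\Lambda_\oplus$: $M::=x\mid\lambda x.M\mid MM\mid M\oplus M$; values $V::=x\mid\lambda x.M$. Contexts $C::=[\,]\mid MC\mid CM\mid\lambda x.C\mid C\oplus M\mid M\oplus C$; weak contexts $W::=[\,]\mid WM\mid MW$. A multi-distribution is a finite multiset $[p_iM_i]_{i\in I}$ with $p_i\in(0,1]$, $\sum_ip_i\le1$; $+$ is multiset union, $q\cdot[p_iM_i]_i=[(qp_i)M_i]_i$, $[M]:=[1M]$. $C[(\lambda x.M)V]\to_{\beta_v}[C[M\{V/x\}]]$; $W[M\oplus N]\to_\oplus[\tfrac12W[M],\tfrac12W[N]]$; $\to:=\to_{\beta_v}\cup\to_\oplus$; surface reduction $\to_s$ is $\to_\oplus$ together with the closure of $\beta_v$ under weak contexts. $M$ is $\to$-normal (surface-normal) if no $\mathbf m$ with $M\to\mathbf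 m$ ($M\to_s\mathbf m$); $\mathrm{Nnf}$ is the set of $\to$-normal terms. Let $\rightsquigarrow_U$ be the unbiased iteration of weak $\beta_v$-reduction on $\Lambda_\oplus$: if $M\to_wM'$ (closure of $\beta_v$ under weak contexts) then $M\rightsquigarrow_UM'$; if $M$ is $\to_w$-normal: $\lambda x.P\rightsquigarrow_U\lambda x.P'$, $PQ\rightsquigarrow_UP'Q$, $PQ\rightsquigarrow_UPQ'$, $P\oplus Q\rightsquigarrow_UP'\oplus Q$, $P\oplus Q\rightsquigarrow_UP\oplus Q'$ whenever $P\rightsquigarrow_UP'$, resp. $Q\rightsquigarrow_UQ'$. $\rightsquigarrow_E$: if $M$ is not surface-normal and $M\to_s\mathbf m$ then $M\rightsquigarrow_E\mathbf m$; if $M$ is surface-normal and $M\rightsquigarrow_UM'$ then $M\rightsquigarrow_E[M']$. The full lifting $\Rrightarrow_E$ is the least relation with: $[M]\Rrightarrow_E[M]$ if $M$ is $\to$-normal; $[M]\Rrightarrow_E\mathbf m$ if $M\rightsquigarrow_E\mathbf m$; $[p_iM_i]_{i\in I}\Rrightarrow_E\sum_ip_i\cdot\mathbf m_i$ if $[M_i]\Rrightarrow_E\mathbf m_i$ for all $i$. $\mathrm{obs}_{\mathrm{Nnf}}([p_iM_i]_{i\in I})$ is the subdistribution $\mu$ on $\mathrm{Nnf}$ with $\mu(N)=\sum_{i:\,M_i=N}p_i$. *)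

theory Defs
  imports Complex_Main "HOL-Library.Multiset"
begin

datatype trm = Var nat | Lam trm | App trm trm | Choice trm trm

fun is_value :: "trm \<Rightarrow> bool" where
  "is_value (Var _) = True"
| "is_value (Lam _) = True"
| "is_value _ = False"

fun lift :: "nat \<Rightarrow> trm \<Rightarrow> trm" where
  "lift k (Var i) = (if i < k then Var i else Var (Suc i))"
| "lift k (Lam M) = Lam (lift (Suc k) M)"
| "lift k (App M N) = App (lift k M) (lift k N)"
| "lift k (Choice M N) = Choice (lift k M) (lift k N)"

text \<open>subst M k N: capture-avoiding substitution of N for index k in M
  (indices above k are decremented, since the binder is removed).\<close>
fun subst :: "trm \<Rightarrow> nat \<Rightarrow> trm \<Rightarrow> trm" where
  "subst (Var i) k N = (if i < k then Var i else if i = k then N else Var (i - 1))"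
| "subst (Lam M) k N = Lam (subst M (Suc k) (lift 0 N))"
| "subst (App M M') k N = App (subst M k N) (subst M' k N)"
| "subst (Choice M M') k N = Choice (subst M k N) (subst M' k N)"

inductive beta :: "trm \<Rightarrow> trm \<Rightarrow> bool" where
  beta_root: "is_value V \<Longrightarrow> beta (App (Lam M) V) (subst M 0 V)"
| beta_appL: "beta M M' \<Longrightarrow> beta (App M N) (App M' N)"
| beta_appR: "beta N N' \<Longrightarrow> beta (App M N) (App M N')"
| beta_lam: "beta M M' \<Longrightarrow> beta (Lam M) (Lam M')"
| beta_choiceL: "beta M M' \<Longrightarrow> beta (Choice M N) (Choice M' N)"
| beta_choiceR: "beta N N' \<Longrightarrow> beta (Choice M N) (Choice M N')"

inductive wbeta :: "trm \<Rightarrow> trm \<Rightarrow> bool" where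
  wbeta_root: "is_value V \<Longrightarrow> wbeta (App (Lam M) V) (subst M 0 V)"
| wbeta_appL: "wbeta M M' \<Longrightarrow> wbeta (App M N) (App M' N)"
| wbeta_appR: "wbeta N N' \<Longrightarrow> wbeta (App M N) (App M N')"

text \<open>choice_redex M L R: M = W[P \<oplus> Q], L = W[P], R = W[Q] for a weak context W\<close>
inductive choice_redex :: "trm \<Rightarrow> trm \<Rightarrow> trm \<Rightarrow> bool" where
  cr_root: "choice_redex (Choice P Q) P Q"
| cr_appL: "choice_redex M L R \<Longrightarrow> choice_redex (App M N) (App L N) (App R N)"
| cr_appR: "choice_redex N L R \<Longrightarrow> choice_redex (App M N) (App M L) (App M R)"

type_synonym mdist = "(real \<times> trm) multiset"

definition is_mdist :: "mdist \<Rightarrow> bool" where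
  "is_mdist m \<longleftrightarrow> (\<forall>x \<in># m. 0 < fst x \<and> fst x \<le> 1) \<and> sum_mset (image_mset fst m) \<le> 1"

definition dirac :: "trm \<Rightarrow> mdist" where
  "dirac M = {#(1, M)#}"

definition scale :: "real \<Rightarrow> mdist \<Rightarrow> mdist" where
  "scale q m = image_mset (\<lambda>(p, M). (q * p, M)) m"

definition red_oplus :: "trm \<Rightarrow> mdist \<Rightarrow> bool" where
  "red_oplus M m \<longleftrightarrow> (\<exists>L R. choice_redex M L R \<and> m = {#(1/2, L), (1/2, R)#})"

definition red :: "trm \<Rightarrow> mdist \<Rightarrow> bool" where
  "red M m \<longleftrightarrow> (\<exists>M'. beta M M' \<and> m = dirac M') \<or> red_oplus M m"

definition sred :: "trm \<Rightarrow> mdist \<Rightarrow> bool" where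
  "sred M m \<longleftrightarrow> (\<exists>M'. wbeta M M' \<and> m = dirac M') \<or> red_oplus M m"

definition normal :: "trm \<Rightarrow> bool" where
  "normal M \<longleftrightarrow> \<not> (\<exists>m. red M m)"

definition surface_normal :: "trm \<Rightarrow> bool" where
  "surface_normal M \<longleftrightarrow> \<not> (\<exists>m. sred M m)"

definition wnormal :: "trm \<Rightarrow> bool" where
  "wnormal M \<longleftrightarrow> \<not> (\<exists>M'. wbeta M M')"

inductive redU :: "trm \<Rightarrow> trm \<Rightarrow> bool" where
  U_w: "wbeta M M' \<Longrightarrow> redU M M'"
| U_lam: "wnormal (Lam P) \<Longrightarrow> redU P P' \<Longrightarrow> redU (Lam P) (Lam P')"
| U_appL: "wnormal (App P Q) \<Longrightarrow> redU P P' \<Longrightarrow> redU (App P Q) (App P' Q)"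
| U_appR: "wnormal (App P Q) \<Longrightarrow> redU Q Q' \<Longrightarrow> redU (App P Q) (App P Q')"
| U_choiceL: "wnormal (Choice P Q) \<Longrightarrow> redU P P' \<Longrightarrow> redU (Choice P Q) (Choice P' Q)"
| U_choiceR: "wnormal (Choice P Q) \<Longrightarrow> redU Q Q' \<Longrightarrow> redU (Choice P Q) (Choice P Q')"

inductive redE :: "trm \<Rightarrow> mdist \<Rightarrow> bool" where
  E_surf: "\<not> surface_normal M \<Longrightarrow> sred M m \<Longrightarrow> redE M m"
| E_U: "surface_normal M \<Longrightarrow> redU M M' \<Longrightarrow> redE M (dirac M')"

text \<open>Full lifting \<Rrightarrow>_E. The family [p_i M_i]_{i \<in> I} together with the chosen
  m_i is represented by a finite multiset F of triples (p_i, M_i, m_i).\<close>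
inductive liftE :: "mdist \<Rightarrow> mdist \<Rightarrow> bool" where
  L_normal: "normal M \<Longrightarrow> liftE (dirac M) (dirac M)"
| L_step: "redE M m \<Longrightarrow> liftE (dirac M) m"
| L_sum: "(\<forall>x \<in># F. liftE (dirac (fst (snd x))) (snd (snd x))) \<Longrightarrow>
          liftE (image_mset (\<lambda>(p, M, _). (p, M)) F)
                (sum_mset (image_mset (\<lambda>(p, _, m). scale p m) F))"

definition obs_Nnf :: "mdist \<Rightarrow> trm \<Rightarrow> real" where
  "obs_Nnf m N = (if normal N then sum_mset (image_mset fst (filter_mset (\<lambda>x. snd x = N) m)) else 0)"

end

theory Submission
  imports Defs
begin


lemma wbeta_beta: "wbeta M N \<Longrightarrow> beta M N"
  by (induction rule: wbeta.induct) (auto intro: beta.intros)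

lemma redU_beta: "redU M N \<Longrightarrow> beta M N"
  by (induction rule: redU.induct) (auto intro: beta.intros wbeta_beta)

lemma no_wbeta_Lam[simp]: "\<not> wbeta (Lam B) X"
  by (auto elim: wbeta.cases)
lemma no_wbeta_Var[simp]: "\<not> wbeta (Var i) X"
  by (auto elim: wbeta.cases)
lemma no_wbeta_Choice[simp]: "\<not> wbeta (Choice P Q) X"
  by (auto elim: wbeta.cases)
lemma value_wnormal: "is_value V \<Longrightarrow> \<not> wbeta V X"
  by (cases V) auto

lemma wnormal_simps[simp]: "wnormal (Lam B)" "wnormal (Var i)" "wnormal (Choice P Q)"
  by (auto simp: wnormal_def)

lemma wnormal_App: "wnormal (App P Q) \<longleftrightarrow> wnormal P \<and> wnormal Q \<and> \<not> ((\<exists>B. P = Lam B) \<and> is_value Q)"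
  unfolding wnormal_def
  by (auto intro: wbeta.intros elim: wbeta.cases)

lemma wbeta_diamond: "wbeta M M1 \<Longrightarrow> wbeta M M2 \<Longrightarrow> M1 = M2 \<or> (\<exists>N. wbeta M1 N \<and> wbeta M2 N)"
proof (induction arbitrary: M2 rule: wbeta.induct)
  case (wbeta_root V M)
  from wbeta_root.prems show ?case
    by (cases rule: wbeta.cases) (use wbeta_root.hyps value_wnormal in auto)
next
  case (wbeta_appL M M' N)
  from wbeta_appL.prems show ?case
  proof (cases rule: wbeta.cases)
    case wbeta_root then show ?thesis using wbeta_appL.hyps by auto
  next
    case (wbeta_appL X) then show ?thesis using wbeta_appL.IH[of X] by (metis wbeta.wbeta_appL)
  next
    case (wbeta_appR X) then show ?thesis using wbeta_appL.hyps by (metis wbeta.wbeta_appL wbeta.wbeta_appR)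
  qed
next
  case (wbeta_appR N N' M)
  from wbeta_appR.prems show ?case
  proof (cases rule: wbeta.cases)
    case wbeta_root then show ?thesis using wbeta_appR.hyps value_wnormal by auto
  next
    case (wbeta_appL X) then show ?thesis using wbeta_appR.hyps by (metis wbeta.wbeta_appL wbeta.wbeta_appR)
  next
    case (wbeta_appR X) then show ?thesis using wbeta_appR.IH[of X] by (metis wbeta.wbeta_appR)
  qed
qed

lemma redU_wnormal: "redU P P' \<Longrightarrow> wnormal P \<Longrightarrow>
   wnormal P' \<and> ((\<exists>B. P' = Lam B) \<longleftrightarrow> (\<exists>B. P = Lam B)) \<and> (is_value P' \<longleftrightarrow> is_value P)"
proof (induction rule: redU.induct)
  case (U_w M M') then show ?case by (auto simp: wnormal_def)
qed (auto simp: wnormal_App)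

lemma wnormal_App_L: "wnormal (App P Q) \<Longrightarrow> redU P P' \<Longrightarrow> wnormal (App P' Q)"
  using redU_wnormal wnormal_App by metis
lemma wnormal_App_R: "wnormal (App P Q) \<Longrightarrow> redU Q Q' \<Longrightarrow> wnormal (App P Q')"
  using redU_wnormal wnormal_App by metis

lemma redU_diamond: "redU M M1 \<Longrightarrow> redU M M2 \<Longrightarrow> M1 = M2 \<or> (\<exists>N. redU M1 N \<and> redU M2 N)"
proof (induction arbitrary: M2 rule: redU.induct)
  case (U_w M M')
  from U_w.prems show ?case
  proof (cases rule: redU.cases)
    case inner: U_w then show ?thesis using wbeta_diamond[OF U_w.hyps] by (metis redU.U_w)
  qed (use U_w.hyps in \<open>auto simp: wnormal_def\<close>)
next
  case (U_lam P P')
  from U_lam.prems show ?case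
  proof (cases rule: redU.cases)
    case U_w then show ?thesis by (auto simp: wnormal_def)
  next
    case (U_lam X) then show ?thesis using U_lam.IH[of X] by (metis redU.U_lam wnormal_simps)
  qed
next
  case (U_appL P Q P')
  from U_appL.prems show ?case
  proof (cases rule: redU.cases)
    case U_w then show ?thesis using U_appL.hyps by (auto simp: wnormal_def)
  next
    case (U_appL X)
    then show ?thesis using U_appL.IH[of X] U_appL.hyps
      by (metis redU.U_appL wnormal_App_L)
  next
    case (U_appR X)
    then show ?thesis using U_appL.hyps
      by (metis redU.U_appL redU.U_appR wnormal_App_L wnormal_App_R)
  qed
next
  case (U_appR P Q Q')
  from U_appR.prems show ?case
  proof (cases rule: redU.cases)
    case U_w then show ?thesis using U_appR.hyps by (auto simp: wnormal_def)
  next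
    case (U_appR X)
    then show ?thesis using U_appR.IH[of X] U_appR.hyps
      by (metis redU.U_appR wnormal_App_R)
  next
    case (U_appL X)
    then show ?thesis using U_appR.hyps
      by (metis redU.U_appL redU.U_appR wnormal_App_L wnormal_App_R)
  qed
next
  case (U_choiceL P Q P')
  from U_choiceL.prems show ?case
  proof (cases rule: redU.cases)
    case U_w then show ?thesis by (auto simp: wnormal_def)
  next
    case (U_choiceL X) then show ?thesis using U_choiceL.IH[of X] by (metis redU.U_choiceL wnormal_simps)
  next
    case (U_choiceR X) then show ?thesis using U_choiceL.hyps by (metis redU.U_choiceL redU.U_choiceR wnormal_simps)
  qed
next
  case (U_choiceR P Q Q')
  from U_choiceR.prems show ?case
  proof (cases rule: redU.cases)
    case U_w then show ?thesis by (auto simp: wnormal_def)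
  next
    case (U_choiceR X) then show ?thesis using U_choiceR.IH[of X] by (metis redU.U_choiceR wnormal_simps)
  next
    case (U_choiceL X) then show ?thesis using U_choiceR.hyps by (metis redU.U_choiceL redU.U_choiceR wnormal_simps)
  qed
qed



lemma cr_no_value: "choice_redex V L R \<Longrightarrow> \<not> is_value V"
  by (auto elim: choice_redex.cases)

lemma wbeta_choice: "wbeta M M1 \<Longrightarrow> choice_redex M L R \<Longrightarrow>
  \<exists>L' R'. wbeta L L' \<and> wbeta R R' \<and> choice_redex M1 L' R'"
proof (induction arbitrary: L R rule: wbeta.induct)
  case (wbeta_root V M)
  from wbeta_root.prems show ?case
    by (cases rule: choice_redex.cases) (use wbeta_root.hyps cr_no_value in \<open>auto elim: choice_redex.cases\<close>)
next
  case (wbeta_appL M M' N)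
  from wbeta_appL.prems show ?case
  proof (cases rule: choice_redex.cases)
    case (cr_appL X Y) then show ?thesis using wbeta_appL.IH[of X Y]
      by (meson choice_redex.cr_appL wbeta.wbeta_appL)
  next
    case (cr_appR X Y) then show ?thesis using wbeta_appL.hyps
      by (meson choice_redex.cr_appR wbeta.wbeta_appL)
  qed
next
  case (wbeta_appR N N' M)
  from wbeta_appR.prems show ?case
  proof (cases rule: choice_redex.cases)
    case (cr_appR X Y) then show ?thesis using wbeta_appR.IH[of X Y]
      by (meson choice_redex.cr_appR wbeta.wbeta_appR)
  next
    case (cr_appL X Y) then show ?thesis using wbeta_appR.hyps
      by (meson choice_redex.cr_appL wbeta.wbeta_appR)
  qed
qed

lemma choice_diamond: "choice_redex M L1 R1 \<Longrightarrow> choice_redex M L2 R2 \<Longrightarrow>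
  (L1 = L2 \<and> R1 = R2) \<or> (\<exists>A B C D. choice_redex L1 A B \<and> choice_redex R1 C D \<and>
     choice_redex L2 A C \<and> choice_redex R2 B D)"
proof (induction arbitrary: L2 R2 rule: choice_redex.induct)
  case (cr_root P Q)
  then show ?case by (auto elim: choice_redex.cases)
next
  case (cr_appL M L R N)
  from cr_appL.prems show ?case
  proof (cases rule: choice_redex.cases)
    case (cr_appL X Y)
    from cr_appL.IH[OF cr_appL(3)] show ?thesis
    proof (elim disjE exE conjE)
      fix A B C D assume "choice_redex L A B" "choice_redex R C D" "choice_redex X A C" "choice_redex Y B D"
      then show ?thesis unfolding cr_appL(1,2)
        by (intro disjI2 exI[of _ "App A N"] exI[of _ "App B N"] exI[of _ "App C N"] exI[of _ "App D N"])
           (auto intro: choice_redex.intros)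
    qed (simp add: cr_appL)
  next
    case (cr_appR X Y) then show ?thesis using cr_appL.hyps
      by (intro disjI2 exI[of _ "App L X"] exI[of _ "App L Y"] exI[of _ "App R X"] exI[of _ "App R Y"])
           (auto intro: choice_redex.intros)
  qed
next
  case (cr_appR N L R M)
  from cr_appR.prems show ?case
  proof (cases rule: choice_redex.cases)
    case (cr_appR X Y)
    from cr_appR.IH[OF cr_appR(3)] show ?thesis
    proof (elim disjE exE conjE)
      fix A B C D assume "choice_redex L A B" "choice_redex R C D" "choice_redex X A C" "choice_redex Y B D"
      then show ?thesis unfolding cr_appR(1,2)
        by (intro disjI2 exI[of _ "App M A"] exI[of _ "App M B"] exI[of _ "App M C"] exI[of _ "App M D"])
           (auto intro: choice_redex.intros)
    qed (simp add: cr_appR)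
  next
    case (cr_appL X Y) then show ?thesis using cr_appR.hyps
      by (intro disjI2 exI[of _ "App X L"] exI[of _ "App X R"] exI[of _ "App Y L"] exI[of _ "App Y R"])
           (auto intro: choice_redex.intros)
  qed
qed

lemma sn_App: "surface_normal (App P Q) \<Longrightarrow> surface_normal P \<and> surface_normal Q"
  unfolding surface_normal_def sred_def red_oplus_def dirac_def
  by (blast intro: wbeta.intros choice_redex.intros)

lemma sn_iff: "surface_normal M \<longleftrightarrow> wnormal M \<and> (\<forall>L R. \<not> choice_redex M L R)"
  unfolding surface_normal_def sred_def red_oplus_def wnormal_def by auto

lemma cr_Lam: "\<not> choice_redex (Lam P) L R"
  by (rule notI, cases rule: choice_redex.cases) auto

lemma cr_App_inv: "choice_redex (App P Q) L R \<Longrightarrow> (\<exists>L' R'. choice_redex P L' R') \<or> (\<exists>L' R'. choice_redex Q L' R')"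
  by (cases rule: choice_redex.cases) auto

lemma sn_Lam: "surface_normal (Lam P)"
  by (simp add: sn_iff cr_Lam)

lemma sn_Choice: "\<not> surface_normal (Choice P Q)"
  using choice_redex.cr_root sn_iff by blast

lemma sn_App_iff: "surface_normal (App P Q) \<longleftrightarrow> wnormal (App P Q) \<and> surface_normal P \<and> surface_normal Q"
  by (meson cr_App_inv sn_App sn_iff)

lemma redU_sn: "redU M M' \<Longrightarrow> surface_normal M \<Longrightarrow> surface_normal M'"
proof (induction rule: redU.induct)
  case (U_w M M') then show ?case by (simp add: sn_iff wnormal_def)
next
  case (U_lam P P') then show ?case by (simp add: sn_Lam)
next
  case (U_appL P Q P')
  then show ?case by (meson sn_App_iff wnormal_App_L)
next
  case (U_appR P Q Q')
  then show ?case by (meson sn_App_iff wnormal_App_R)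
next
  case (U_choiceL P Q P') then show ?case by (simp add: sn_Choice)
next
  case (U_choiceR P Q Q') then show ?case by (simp add: sn_Choice)
qed

lemma beta_redU_ex: "beta M M' \<Longrightarrow> \<exists>M''. redU M M''"
proof (induction rule: beta.induct)
  case (beta_root V M) then show ?case by (blast intro: redU.intros wbeta.intros)
next
  case (beta_appL M M' N)
  then obtain X where "redU M X" by blast
  then show ?case by (metis redU.U_appL redU.U_w wnormal_def)
next
  case (beta_appR M M' N)
  then obtain X where "redU M X" by blast
  then show ?case by (metis redU.U_appR redU.U_w wnormal_def)
next
  case (beta_lam M M') then show ?case by (blast intro: redU.intros wnormal_simps)
next
  case (beta_choiceL M M' N) then show ?case by (blast intro: redU.intros wnormal_simps)
next
  case (beta_choiceR M M' N) then show ?case by (blast intro: redU.intros wnormal_simps)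
qed

lemma redE_not_normal: "redE M m \<Longrightarrow> \<not> normal M"
  by (induction rule: redE.induct)
     (auto simp: normal_def red_def sred_def dest: wbeta_beta redU_beta)

lemma sred_not_normal: "sred M m \<Longrightarrow> \<not> normal M"
  by (auto simp: normal_def red_def sred_def dest: wbeta_beta)

lemma redE_ex: "\<not> normal M \<Longrightarrow> \<exists>m. redE M m"
proof -
  assume "\<not> normal M"
  then obtain m where r: "red M m" by (auto simp: normal_def)
  show ?thesis
  proof (cases "surface_normal M")
    case False
    then show ?thesis using redE.E_surf surface_normal_def by blast
  next
    case True
    with r obtain M' where "beta M M'" by (auto simp: red_def surface_normal_def sred_def)
    then obtain M'' where "redU M M''" using beta_redU_ex by blast
    then show ?thesis using True redE.E_U by blast
  qed
qed



lemma scale_add[simp]: "scale p (a + b) = scale p a + scale p b"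
  by (simp add: scale_def)
lemma scale_empty[simp]: "scale p {#} = {#}"
  by (simp add: scale_def)
lemma scale_add_mset[simp]: "scale p (add_mset (q, M) a) = add_mset (p * q, M) (scale p a)"
  by (simp add: scale_def)
lemma scale_one[simp]: "scale 1 m = m"
  by (induction m) (auto simp: scale_def)
lemma scale_scale[simp]: "scale p (scale q m) = scale (p * q) m"
  by (induction m) (auto simp: scale_def mult.assoc)
lemma scale_dirac[simp]: "scale p (dirac M) = {#(p, M)#}"
  by (simp add: scale_def dirac_def)
lemma scale_sum: "scale p (sum_mset X) = sum_mset (image_mset (scale p) X)"
  by (induction X) auto

lemma liftE_inv: assumes "liftE a b" shows "\<exists>F. a = image_mset (\<lambda>(p, M, _). (p, M)) F
   \<and> b = sum_mset (image_mset (\<lambda>(p, _, m). scale p m) F)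
   \<and> (\<forall>x \<in># F. liftE (dirac (fst (snd x))) (snd (snd x)))"
  using assms
proof (cases rule: liftE.cases)
  case (L_normal M)
  then show ?thesis
    by (intro exI[of _ "{#(1, M, dirac M)#}"]) (use liftE.L_normal[of M] in \<open>auto simp: dirac_def\<close>)
next
  case (L_step M)
  then show ?thesis
    by (intro exI[of _ "{#(1, M, b)#}"]) (use liftE.L_step[of M b] in \<open>auto simp: dirac_def\<close>)
next
  case (L_sum F)
  then show ?thesis by blast
qed

lemma liftE_add: "liftE a s \<Longrightarrow> liftE b t \<Longrightarrow> liftE (a + b) (s + t)"
proof -
  assume "liftE a s" "liftE b t"
  then obtain F G where F: "a = image_mset (\<lambda>(p, M, _). (p, M)) F"
   "s = sum_mset (image_mset (\<lambda>(p, _, m). scale p m) F)"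
   "\<forall>x \<in># F. liftE (dirac (fst (snd x))) (snd (snd x))"
   and G: "b = image_mset (\<lambda>(p, M, _). (p, M)) G"
   "t = sum_mset (image_mset (\<lambda>(p, _, m). scale p m) G)"
   "\<forall>x \<in># G. liftE (dirac (fst (snd x))) (snd (snd x))"
    using liftE_inv by metis
  have "liftE (image_mset (\<lambda>(p, M, _). (p, M)) (F + G)) (sum_mset (image_mset (\<lambda>(p, _, m). scale p m) (F + G)))"
    by (rule liftE.L_sum) (use F(3) G(3) in auto)
  then show ?thesis using F G by simp
qed

lemma liftE_scale: "liftE a s \<Longrightarrow> liftE (scale q a) (scale q s)"
proof -
  assume "liftE a s"
  then obtain F where F: "a = image_mset (\<lambda>(p, M, _). (p, M)) F"
   "s = sum_mset (image_mset (\<lambda>(p, _, m). scale p m) F)"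
   "\<forall>x \<in># F. liftE (dirac (fst (snd x))) (snd (snd x))"
    using liftE_inv by metis
  define F' where "F' = image_mset (\<lambda>(p, M, m). (q * p, M, m)) F"
  have "liftE (image_mset (\<lambda>(p, M, _). (p, M)) F') (sum_mset (image_mset (\<lambda>(p, _, m). scale p m) F'))"
    by (rule liftE.L_sum) (use F(3) in \<open>auto simp: F'_def\<close>)
  moreover have "image_mset (\<lambda>(p, M, _). (p, M)) F' = scale q a"
    unfolding F'_def F(1) scale_def by (simp add: multiset.map_comp case_prod_beta comp_def)
  moreover have "sum_mset (image_mset (\<lambda>(p, _, m). scale p m) F') = scale q s"
    unfolding F'_def F(2) scale_sum by (simp add: multiset.map_comp case_prod_beta comp_def)
  ultimately show ?thesis by (simp only:)
qed

lemma liftE_dirac_inv: "liftE a b \<Longrightarrow> a = dirac M \<Longrightarrow> (normal M \<and> b = dirac M) \<or> redE M b"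
proof (induction arbitrary: M rule: liftE.induct)
  case (L_normal M) then show ?case by (auto simp: dirac_def)
next
  case (L_step M m) then show ?case by (auto simp: dirac_def)
next
  case (L_sum F)
  from L_sum.prems have "size F = 1" by (metis dirac_def size_image_mset size_single)
  then obtain x where x: "F = {#x#}" using size_1_singleton_mset by blast
  obtain p N m where xe: "x = (p, N, m)" by (cases x) auto
  from L_sum.prems have "p = 1" "N = M" by (auto simp: x xe dirac_def)
  with L_sum.IH show ?case by (auto simp: x xe)
qed

lemma liftE_dirac_iff: "liftE (dirac M) b \<longleftrightarrow> (normal M \<and> b = dirac M) \<or> redE M b"
  using liftE_dirac_inv liftE.L_normal liftE.L_step by blast

lemma liftE_ex: "\<exists>s. liftE n s"
proof (induction n)
  case empty
  have "liftE (image_mset (\<lambda>(p, M, _). (p, M)) {#}) (sum_mset (image_mset (\<lambda>(p, _, m). scale p m) {#}))"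
    using liftE.L_sum[of "{#}"] by simp
  then show ?case by auto
next
  case (add x n)
  obtain p M where xe: "x = (p, M)" by (cases x) auto
  obtain s where s: "liftE n s" using add by blast
  obtain t where t: "liftE (dirac M) t"
    using liftE_dirac_iff redE_ex by blast
  have "liftE (scale p (dirac M) + n) (scale p t + s)"
    by (intro liftE_add liftE_scale s t)
  then show ?case by (auto simp: xe)
qed

lemma liftE_half: "liftE (dirac L) x \<Longrightarrow> liftE (dirac R) y \<Longrightarrow>
   liftE {#(1/2, L), (1/2, R)#} (scale (1/2) x + scale (1/2) y)"
proof -
  assume a: "liftE (dirac L) x" "liftE (dirac R) y"
  have "liftE (scale (1/2) (dirac L) + scale (1/2) (dirac R)) (scale (1/2) x + scale (1/2) y)"
    by (intro liftE_add liftE_scale a)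
  moreover have "scale (1/2) (dirac L) + scale (1/2) (dirac R) = {#(1/2, L), (1/2, R)#}"
    by (simp add: add_mset_commute)
  ultimately show ?thesis by (simp only:)
qed



lemma wbeta_lift: "wbeta M N \<Longrightarrow> liftE (dirac M) (dirac N) \<and> \<not> normal M"
proof -
  assume w: "wbeta M N"
  then have "sred M (dirac N)" by (auto simp: sred_def)
  then show ?thesis using sred_not_normal
    by (metis liftE.L_step redE.E_surf surface_normal_def)
qed

lemma choice_lift: "choice_redex M L R \<Longrightarrow> liftE (dirac M) {#(1/2, L), (1/2, R)#} \<and> \<not> normal M"
proof -
  assume w: "choice_redex M L R"
  then have "sred M {#(1/2, L), (1/2, R)#}" by (auto simp: sred_def red_oplus_def)
  then show ?thesis using sred_not_normal
    by (metis liftE.L_step redE.E_surf surface_normal_def)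
qed

lemma half_dirac: "scale (1/2) (dirac L) + scale (1/2) (dirac R) = {#(1/2, L), (1/2, R)#}"
  by simp

lemma wbeta_choice_join: "wbeta M M1 \<Longrightarrow> choice_redex M L R \<Longrightarrow>
  \<exists>s. liftE (dirac M1) s \<and> liftE {#(1/2, L), (1/2, R)#} s \<and> \<not> normal M1 \<and> \<not> normal L \<and> \<not> normal R"
proof -
  assume a: "wbeta M M1" "choice_redex M L R"
  then obtain L' R' where l: "wbeta L L'" "wbeta R R'" "choice_redex M1 L' R'"
    using wbeta_choice by blast
  have "liftE {#(1/2, L), (1/2, R)#} (scale (1/2) (dirac L') + scale (1/2) (dirac R'))"
    using liftE_half wbeta_lift l by blast
  then show ?thesis using choice_lift[OF l(3)] wbeta_lift l half_dirac by metis
qed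

lemma key: assumes "redE M a" "redE M b" shows "a = b \<or>
  ((\<exists>s. liftE a s \<and> liftE b s) \<and> (\<forall>x\<in>#a. \<not> normal (snd x)) \<and> (\<forall>x\<in>#b. \<not> normal (snd x)))"
  using assms(1)
proof (cases rule: redE.cases)
  case (E_surf)
  from assms(2) show ?thesis
  proof (cases rule: redE.cases)
    case E_U then show ?thesis using E_surf by simp
  next
    case E_surf2: E_surf
    have sa: "sred M a" and sb: "sred M b" using E_surf E_surf2 by auto
    show ?thesis
    proof -
      {
        fix M1 M2 assume w1: "wbeta M M1" "a = dirac M1" and w2: "wbeta M M2" "b = dirac M2"
        have ?thesis
        proof (cases "M1 = M2")
          case True then show ?thesis using w1 w2 by simp
        next
          case False
          then obtain N where "wbeta M1 N" "wbeta M2 N" using wbeta_diamond w1 w2 by blast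
          then have "liftE (dirac M1) (dirac N)" "liftE (dirac M2) (dirac N)" "\<not> normal M1" "\<not> normal M2"
            using wbeta_lift by blast+
          then show ?thesis using w1(2) w2(2) by (auto simp: dirac_def)
        qed
      }
      moreover {
        fix M1 L R assume w1: "wbeta M M1" "a = dirac M1" and c: "choice_redex M L R" "b = {#(1/2, L), (1/2, R)#}"
        have ?thesis using wbeta_choice_join[OF w1(1) c(1)] w1 c by (auto simp: dirac_def)
      }
      moreover {
        fix M1 L R assume w1: "wbeta M M1" "b = dirac M1" and c: "choice_redex M L R" "a = {#(1/2, L), (1/2, R)#}"
        have ?thesis using wbeta_choice_join[OF w1(1) c(1)] w1 c by (auto simp: dirac_def)
      }
      moreover {
        fix L1 R1 L2 R2 assume c1: "choice_redex M L1 R1" "a = {#(1/2, L1), (1/2, R1)#}"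
          and c2: "choice_redex M L2 R2" "b = {#(1/2, L2), (1/2, R2)#}"
        have ?thesis
        proof (cases "L1 = L2 \<and> R1 = R2")
          case True then show ?thesis using c1 c2 by simp
        next
          case False
          then obtain A B C D where abcd: "choice_redex L1 A B" "choice_redex R1 C D"
            "choice_redex L2 A C" "choice_redex R2 B D"
            using choice_diamond[OF c1(1) c2(1)] by blast
          have s1: "liftE a (scale (1/2) {#(1/2, A), (1/2, B)#} + scale (1/2) {#(1/2, C), (1/2, D)#})"
            unfolding c1(2) using liftE_half choice_lift abcd by blast
          have s2: "liftE b (scale (1/2) {#(1/2, A), (1/2, C)#} + scale (1/2) {#(1/2, B), (1/2, D)#})"
            unfolding c2(2) using liftE_half choice_lift abcd by blast
          have eq: "scale (1/2) {#(1/2, A), (1/2, C)#} + scale (1/2) {#(1/2, B), (1/2, D)#}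
             = scale (1/2) {#(1/2, A), (1/2, B)#} + scale (1/2) {#(1/2, C), (1/2, D)#}"
            by (simp add: add_mset_commute)
          from s2 have s2': "liftE b (scale (1/2) {#(1/2, A), (1/2, B)#} + scale (1/2) {#(1/2, C), (1/2, D)#})"
            by (simp only: eq)
          have j: "\<exists>s. liftE a s \<and> liftE b s" using s1 s2' by blast
          show ?thesis using j choice_lift abcd c1 c2 by auto
        qed
      }
      ultimately show ?thesis using sa sb unfolding sred_def red_oplus_def by blast
    qed
  qed
next
  case (E_U M')
  from assms(2) show ?thesis
  proof (cases rule: redE.cases)
    case E_surf then show ?thesis using E_U by simp
  next
    case E_U2: (E_U M'')
    show ?thesis
    proof (cases "M' = M''")
      case True then show ?thesis using E_U E_U2 by simp
    next
      case False
      then obtain N where n: "redU M' N" "redU M'' N" using redU_diamond E_U E_U2 by blast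
      have sn: "surface_normal M'" "surface_normal M''" using redU_sn E_U E_U2 by auto
      have "liftE (dirac M') (dirac N)" "liftE (dirac M'') (dirac N)"
        using n sn by (auto intro: liftE.L_step redE.E_U)
      moreover have "\<not> normal M'" "\<not> normal M''"
        using n redE_not_normal sn redE.E_U by blast+
      ultimately show ?thesis using E_U E_U2 by (auto simp: dirac_def)
    qed
  qed
qed



definition gg :: "real \<times> trm \<times> mdist \<Rightarrow> mdist" where
  "gg = (\<lambda>(p, _, m). scale p m)"
definition ff :: "real \<times> trm \<times> mdist \<Rightarrow> real \<times> trm" where
  "ff = (\<lambda>(p, M, _). (p, M))"

lemma gg_simp[simp]: "gg (p, M, m) = scale p m" by (simp add: gg_def)
lemma ff_simp[simp]: "ff (p, M, m) = (p, M)" by (simp add: ff_def)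

lemma liftE_inv': "liftE a b \<Longrightarrow> \<exists>F. a = image_mset ff F \<and> b = sum_mset (image_mset gg F)
   \<and> (\<forall>x \<in># F. liftE (dirac (fst (snd x))) (snd (snd x)))"
  unfolding ff_def gg_def by (rule liftE_inv)

lemma nn_obs: "(\<forall>x\<in>#a. \<not> normal (snd x)) \<Longrightarrow> obs_Nnf a N = 0"
  unfolding obs_Nnf_def by (induction a) auto

lemma liftE_empty: "liftE {#} {#}"
  using liftE.L_sum[of "{#}"] by simp

lemma term_diamond: "liftE (dirac M) a \<Longrightarrow> liftE (dirac M) b \<Longrightarrow>
   \<exists>s. liftE a s \<and> liftE b s \<and> obs_Nnf a = obs_Nnf b"
proof -
  assume a: "liftE (dirac M) a" and b: "liftE (dirac M) b"
  show ?thesis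
  proof (cases "normal M")
    case True
    then have "a = dirac M" "b = dirac M" using a b liftE_dirac_iff redE_not_normal by blast+
    then show ?thesis using True liftE.L_normal by blast
  next
    case False
    then have ra: "redE M a" and rb: "redE M b" using a b liftE_dirac_iff by blast+
    from key[OF ra rb] show ?thesis
    proof
      assume "a = b" then show ?thesis using liftE_ex by blast
    next
      assume h: "(\<exists>s. liftE a s \<and> liftE b s) \<and> (\<forall>x\<in>#a. \<not> normal (snd x)) \<and> (\<forall>x\<in>#b. \<not> normal (snd x))"
      then have "obs_Nnf a = obs_Nnf b" using nn_obs by (intro ext) metis
      with h show ?thesis by blast
    qed
  qed
qed

lemma obs_add: "obs_Nnf (a + b) N = obs_Nnf a N + obs_Nnf b N"
  by (simp add: obs_Nnf_def)

lemma obs_scale: "obs_Nnf (scale p a) N = p * obs_Nnf a N"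
proof (induction a)
  case empty then show ?case by (simp add: obs_Nnf_def)
next
  case (add x a)
  obtain q M where x: "x = (q, M)" by (cases x) auto
  show ?case using add by (auto simp: x obs_Nnf_def algebra_simps split: if_splits)
qed

lemma pairing: "image_mset f F1 = image_mset f F2 \<Longrightarrow>
  \<exists>G. image_mset fst G = F1 \<and> image_mset snd G = F2 \<and> (\<forall>z\<in>#G. f (fst z) = f (snd z))"
proof (induction F1 arbitrary: F2)
  case empty then show ?case by (intro exI[of _ "{#}"]) simp
next
  case (add x F1)
  have "f x \<in># image_mset f F2" using add.prems by (metis union_single_eq_member image_mset_add_mset)
  then obtain y where y: "y \<in># F2" "f y = f x" by auto
  define F2' where "F2' = F2 - {#y#}"
  have F2: "F2 = add_mset y F2'" using y(1) by (simp add: F2'_def)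
  have "image_mset f F1 = image_mset f F2'" using add.prems y(2) by (simp add: F2)
  then obtain G where G: "image_mset fst G = F1" "image_mset snd G = F2'" "\<forall>z\<in>#G. f (fst z) = f (snd z)"
    using add.IH by blast
  show ?case
    by (rule exI[of _ "add_mset (x, y) G"]) (use G y F2 in auto)
qed

lemma pair_join:
  assumes "\<forall>z\<in>#G. fst (fst z) = fst (snd z) \<and> fst (snd (fst z)) = fst (snd (snd z))
      \<and> liftE (dirac (fst (snd (fst z)))) (snd (snd (fst z)))
      \<and> liftE (dirac (fst (snd (snd z)))) (snd (snd (snd z)))"
  shows "\<exists>s. liftE (sum_mset (image_mset (gg \<circ> fst) G)) s \<and> liftE (sum_mset (image_mset (gg \<circ> snd) G)) s
     \<and> obs_Nnf (sum_mset (image_mset (gg \<circ> fst) G)) = obs_Nnf (sum_mset (image_mset (gg \<circ> snd) G))"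
  using assms
proof (induction G)
  case empty then show ?case using liftE_empty by auto
next
  case (add z G)
  obtain s where s: "liftE (sum_mset (image_mset (gg \<circ> fst) G)) s" "liftE (sum_mset (image_mset (gg \<circ> snd) G)) s"
     "obs_Nnf (sum_mset (image_mset (gg \<circ> fst) G)) = obs_Nnf (sum_mset (image_mset (gg \<circ> snd) G))"
  proof -
    have "\<forall>z\<in>#G. fst (fst z) = fst (snd z) \<and> fst (snd (fst z)) = fst (snd (snd z))
      \<and> liftE (dirac (fst (snd (fst z)))) (snd (snd (fst z)))
      \<and> liftE (dirac (fst (snd (snd z)))) (snd (snd (snd z)))"
      using add.prems by (metis insert_iff set_mset_add_mset_insert)
    then show ?thesis using add.IH that by blast
  qed
  obtain p M a p' M' b where z: "z = ((p, M, a), (p', M', b))" by (metis prod.exhaust)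
  have zz: "p' = p" "M' = M" "liftE (dirac M) a" "liftE (dirac M) b" using add.prems by (auto simp: z)
  obtain t where t: "liftE a t" "liftE b t" "obs_Nnf a = obs_Nnf b"
    using term_diamond[OF zz(3,4)] by blast
  have "liftE (scale p a + sum_mset (image_mset (gg \<circ> fst) G)) (scale p t + s)"
    by (intro liftE_add liftE_scale t s)
  moreover have "liftE (scale p b + sum_mset (image_mset (gg \<circ> snd) G)) (scale p t + s)"
    by (intro liftE_add liftE_scale t s)
  moreover have "obs_Nnf (scale p a + sum_mset (image_mset (gg \<circ> fst) G)) = obs_Nnf (scale p b + sum_mset (image_mset (gg \<circ> snd) G))"
    using t(3) s(3) by (intro ext) (simp add: obs_add obs_scale)
  moreover have e1: "sum_mset (image_mset (gg \<circ> fst) (add_mset z G)) = scale p a + sum_mset (image_mset (gg \<circ> fst) G)"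
    by (simp add: z)
  moreover have e2: "sum_mset (image_mset (gg \<circ> snd) (add_mset z G)) = scale p b + sum_mset (image_mset (gg \<circ> snd) G)"
    by (simp add: z zz)
  ultimately show ?case by metis
qed

definition wpos :: "mdist \<Rightarrow> bool" where
  "wpos m \<longleftrightarrow> (\<forall>x\<in>#m. 0 < fst x \<and> fst x \<le> 1)"
definition total :: "mdist \<Rightarrow> real" where
  "total m = sum_mset (image_mset fst m)"

lemma dirac_props: "liftE (dirac M) m \<Longrightarrow> wpos m \<and> total m = 1"
proof -
  assume "liftE (dirac M) m"
  then have "(normal M \<and> m = dirac M) \<or> redE M m" using liftE_dirac_iff by blast
  moreover have "wpos m \<and> total m = 1" if "redE M m"
    using that
  proof (cases rule: redE.cases)
    case E_surf then show ?thesis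
      by (auto simp: sred_def red_oplus_def wpos_def total_def dirac_def)
  next
    case E_U then show ?thesis by (auto simp: wpos_def total_def dirac_def)
  qed
  ultimately show ?thesis by (auto simp: wpos_def total_def dirac_def)
qed

lemma total_scale: "total (scale p m) = p * total m"
proof (induction m)
  case empty then show ?case by (simp add: total_def)
next
  case (add x m)
  obtain q M where x: "x = (q, M)" by (cases x) auto
  show ?case using add by (simp add: x total_def algebra_simps)
qed

lemma wpos_scale: "0 < p \<Longrightarrow> p \<le> 1 \<Longrightarrow> wpos m \<Longrightarrow> wpos (scale p m)"
  unfolding wpos_def scale_def by (auto simp: mult_le_one)

lemma lift_weights: "(\<forall>x \<in># F. liftE (dirac (fst (snd x))) (snd (snd x))) \<Longrightarrow> wpos (image_mset ff F) \<Longrightarrow>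
   wpos (sum_mset (image_mset gg F)) \<and> total (sum_mset (image_mset gg F)) = total (image_mset ff F)"
proof (induction F)
  case empty then show ?case by (simp add: wpos_def total_def)
next
  case (add x F)
  obtain p M m where x: "x = (p, M, m)" by (metis prod.exhaust)
  have l: "liftE (dirac M) m" using add.prems(1) by (simp add: x)
  have d: "wpos m" "total m = 1" using dirac_props[OF l] by auto
  have w: "wpos (add_mset (p, M) (image_mset ff F))" using add.prems(2) by (simp add: x)
  then have p: "0 < p" "p \<le> 1" unfolding wpos_def by auto
  from w have wF: "wpos (image_mset ff F)" unfolding wpos_def by simp
  have aF: "\<forall>x \<in># F. liftE (dirac (fst (snd x))) (snd (snd x))" using add.prems(1) by simp
  have ih: "wpos (sum_mset (image_mset gg F))" "total (sum_mset (image_mset gg F)) = total (image_mset ff F)"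
    using add.IH[OF aF wF] by auto
  have "wpos (scale p m)" using wpos_scale p d by blast
  then show ?case using ih d total_scale[of p m]
    by (auto simp: x wpos_def total_def)
qed

lemma liftE_mdist: "liftE n s \<Longrightarrow> is_mdist n \<Longrightarrow> is_mdist s"
proof -
  assume "liftE n s" "is_mdist n"
  then obtain F where F: "n = image_mset ff F" "s = sum_mset (image_mset gg F)"
     "\<forall>x \<in># F. liftE (dirac (fst (snd x))) (snd (snd x))" using liftE_inv' by blast
  have "wpos n" "total n \<le> 1" using \<open>is_mdist n\<close> by (auto simp: is_mdist_def wpos_def total_def)
  then show ?thesis using lift_weights[OF F(3)] F(1,2)
    by (auto simp: is_mdist_def wpos_def total_def)
qed

theorem mainTheorem7:
  assumes "is_mdist m" and "is_mdist n1" and "is_mdist n2"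
    and "liftE m n1" and "liftE m n2"
  shows "(n1 = n2 \<or> (\<exists>s. is_mdist s \<and> liftE n1 s \<and> liftE n2 s))
         \<and> obs_Nnf n1 = obs_Nnf n2"
proof -
  obtain F1 where F1: "m = image_mset ff F1" "n1 = sum_mset (image_mset gg F1)"
     "\<forall>x \<in># F1. liftE (dirac (fst (snd x))) (snd (snd x))" using liftE_inv' assms(4) by blast
  obtain F2 where F2: "m = image_mset ff F2" "n2 = sum_mset (image_mset gg F2)"
     "\<forall>x \<in># F2. liftE (dirac (fst (snd x))) (snd (snd x))" using liftE_inv' assms(5) by blast
  obtain G where G: "image_mset fst G = F1" "image_mset snd G = F2" "\<forall>z\<in>#G. ff (fst z) = ff (snd z)"
    using pairing[of ff F1 F2] F1(1) F2(1) by metis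
  have P: "\<forall>z\<in>#G. fst (fst z) = fst (snd z) \<and> fst (snd (fst z)) = fst (snd (snd z))
      \<and> liftE (dirac (fst (snd (fst z)))) (snd (snd (fst z)))
      \<and> liftE (dirac (fst (snd (snd z)))) (snd (snd (snd z)))"
  proof
    fix z assume z: "z \<in># G"
    then have "fst z \<in># F1" "snd z \<in># F2" using G(1,2) by force+
    moreover have "ff (fst z) = ff (snd z)" using G(3) z by blast
    ultimately show "fst (fst z) = fst (snd z) \<and> fst (snd (fst z)) = fst (snd (snd z))
      \<and> liftE (dirac (fst (snd (fst z)))) (snd (snd (fst z)))
      \<and> liftE (dirac (fst (snd (snd z)))) (snd (snd (snd z)))"
      using F1(3) F2(3) by (auto simp: ff_def split: prod.splits)
  qed
  have n1: "n1 = sum_mset (image_mset (gg \<circ> fst) G)" unfolding F1(2) G(1)[symmetric] by (simp add: multiset.map_comp)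
  have n2: "n2 = sum_mset (image_mset (gg \<circ> snd) G)" unfolding F2(2) G(2)[symmetric] by (simp add: multiset.map_comp)
  obtain s where s: "liftE n1 s" "liftE n2 s" "obs_Nnf n1 = obs_Nnf n2"
    using pair_join[OF P] n1 n2 by blast
  have "is_mdist s" using liftE_mdist[OF s(1) assms(2)] .
  then show ?thesis using s by blast
qed

end
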